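(* Let $T_M>0$ and $c>0$. Let $f\in C^2(\mathbb R_+)\cap C_b(\mathbb R_+)$ be a solution of $$f''(y)-cf'(y)-f^4(y)=-\int_0^\infty E(y-\eta)f^4(\eta)\,d\eta\ (y>0),\qquad f(0)=T_M,\qquad f\ge 0,$$ with $|f|\le T_M$. Then $f(y)<T_M$ for all $y>0$ and $\partial_yf(0^+)<0$.
   Context: $E(x)=\frac12\int_{|x|}^\infty\frac{e^{-t}}{t}dt$; $\mathbb R_+=[0,\infty)$; $C_b$ denotes bounded continuous functions. *)

theory Defs
  imports "HOL-Analysis.Analysis"
begin

text \<open>Exponential-integral kernel E(x) = 1/2 * int_{|x|}^infty e^{-t}/t dt
  (at x = 0 the integral diverges; the value there is irrelevant, a null set).\<close>
definition E :: "real \<Rightarrow> real" where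
  "E x = (1/2) * integral {\<bar>x\<bar>..} (\<lambda>t. exp (- t) / t)"

end

theory Submission imports Defs "HOL-Real_Asymp.Real_Asymp" begin

definition E1 :: "real \<Rightarrow> real" where
  "E1 s = integral {s..} (\<lambda>t. exp (- t) / t)"

lemma E_E1: "E x = E1 \<bar>x\<bar> / 2"
  by (simp add: E_def E1_def)

lemma E1_has_int: fixes s :: real assumes "s > 0" shows "(\<lambda>t. exp (- t) / t) integrable_on {s..}"
proof (rule measurable_bounded_by_integrable_imp_integrable)
  show L: "{s..} \<in> sets lebesgue"
      by (rule lebesgue_closedin[of UNIV]) auto
  have "continuous_on {s..} (\<lambda>t. exp (- t) / t)"
      using assms by (intro continuous_on_divide continuous_intros) auto
  then show "(\<lambda>t. exp (- t) / t) \<in> borel_measurable (lebesgue_on {s..})"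
      by (intro continuous_imp_measurable_on_sets_lebesgue L)
  show "(\<lambda>t. exp (- 1 * t) / s) integrable_on {s..}"
    using integrable_on_divide[OF integrable_on_exp_minus_to_infinity[of 1 s], of s] by simp
  show "norm (exp (- t) / t) \<le> exp (- 1 * t) / s" if "t \<in> {s..}" for t
    using that assms by (auto simp: divide_simps)
qed

lemma E1_split: assumes "0 < s" "s \<le> b"
  shows "E1 s = integral {s..b} (\<lambda>t. exp (- t) / t) + E1 b"
proof -
  have i1: "((\<lambda>t. exp (- t) / t) has_integral E1 b) {b..}"
    using E1_has_int[of b] assms unfolding E1_def by (simp add: integrable_integral)
  have i2: "((\<lambda>t. exp (- t) / t) has_integral integral {s..b} (\<lambda>t. exp (- t) / t)) {s..b}"
    using assms by (intro integrable_integral integrable_continuous_interval continuous_intros) auto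
  have "((\<lambda>t. exp (- t) / t) has_integral (integral {s..b} (\<lambda>t. exp (- t) / t) + E1 b)) ({s..b} \<union> {b..})"
    by (rule has_integral_Un[OF i2 i1]) (auto intro: negligible_subset[of "{b}"])
  moreover have "{s..b} \<union> {b..} = {s..}" using assms by auto
  ultimately show ?thesis unfolding E1_def by (simp add: integral_unique)
qed

lemma E1_deriv: assumes "s > 0" shows "(E1 has_real_derivative - (exp (- s) / s)) (at s)"
proof -
  let ?F = "\<lambda>t. exp (- t) / t"
  have "((\<lambda>x. integral {x..s+1} ?F) has_real_derivative - ?F s) (at s within {s/2..s+1})"
    using assms by (intro integral_has_real_derivative' continuous_intros) auto
  moreover have "at s within {s/2..s+1} = at s"
    using assms by (intro at_within_interior) auto
  ultimately have d: "((\<lambda>x. integral {x..s+1} ?F + E1 (s+1)) has_real_derivative - ?F s) (at s)"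
    by (auto intro!: derivative_eq_intros)
  show ?thesis
  proof (rule has_field_derivative_transform_within_open[OF d, of "{s/2<..<s+1}"])
    show "integral {x..s+1} ?F + E1 (s+1) = E1 x" if "x \<in> {s/2<..<s+1}" for x
      using that assms by (intro E1_split[symmetric]) auto
  qed (use assms in auto)
qed

lemma E1_nonneg: "s > 0 \<Longrightarrow> E1 s \<ge> 0"
  unfolding E1_def by (rule integral_nonneg) (auto intro: E1_has_int)

lemma E1_nonneg0: "s \<ge> 0 \<Longrightarrow> E1 s \<ge> 0"
  unfolding E1_def
  by (cases "(\<lambda>t. exp (- t) / t) integrable_on {s..}")
     (auto intro!: integral_nonneg simp: not_integrable_integral)

lemma E_nonneg: "E x \<ge> 0"
  using E1_nonneg0[of "\<bar>x\<bar>"] by (simp add: E_E1)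

lemma E1_log: assumes "0 < s" "s \<le> 1" shows "E1 s \<le> E1 1 - ln s"
proof -
  have "E1 s + ln s \<le> E1 1 + ln 1"
  proof (rule DERIV_nonneg_imp_nondecreasing[OF assms(2)])
    fix x assume x: "s \<le> x" "x \<le> 1"
    then have "x > 0" using assms by auto
    have "((\<lambda>x. E1 x + ln x) has_real_derivative (- (exp (- x) / x) + 1 / x)) (at x)"
      using \<open>x > 0\<close> by (intro DERIV_add E1_deriv DERIV_ln_divide)
    moreover have "- (exp (- x) / x) + 1 / x \<ge> 0"
      using \<open>x > 0\<close> by (auto simp: field_simps)
    ultimately show "\<exists>y. ((\<lambda>x. E1 x + ln x) has_real_derivative y) (at x) \<and> 0 \<le> y" by blast
  qed
  then show ?thesis by simp
qed

lemma int_exp_Icc: fixes s b :: real assumes "s \<le> b"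
  shows "((\<lambda>t. exp (- t)) has_integral (exp (- s) - exp (- b))) {s..b}"
proof -
  have "((\<lambda>t. exp (- t)) has_integral ((- exp (- b)) - (- exp (- s)))) {s..b}"
    using assms by (intro fundamental_theorem_of_calculus[where f="\<lambda>t. - exp (- t)"])
      (auto intro!: derivative_eq_intros simp flip: has_real_derivative_iff_has_vector_derivative)
  then show ?thesis by simp
qed

lemma E1_le: assumes "s > 0" shows "E1 s \<le> exp (- s) / s"
proof -
  have "E1 s \<le> integral {s..} (\<lambda>t. exp (- 1 * t) / s)"
    unfolding E1_def
  proof (rule integral_le)
    show "(\<lambda>t. exp (- 1 * t) / s) integrable_on {s..}"
      using integrable_on_divide[OF integrable_on_exp_minus_to_infinity[of 1 s], of s] by simp
  qed (use assms E1_has_int in \<open>auto simp: divide_simps\<close>)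
  also have "\<dots> = exp (- s) / s"
    using integral_unique[OF has_integral_divide[OF has_integral_exp_minus_to_infinity[of 1 s], of s]]
    by simp
  finally show ?thesis .
qed

lemma E1_strict: assumes "s > 0" shows "s * E1 s < exp (- s)"
proof -
  let ?F = "\<lambda>t. exp (- t) / t"
  have "integral {s..s+1} ?F \<le> integral {s..s+1} (\<lambda>t. exp (- t) / s)"
  proof (rule integral_le)
    show "?F integrable_on {s..s+1}"
      using assms by (intro integrable_continuous_interval continuous_intros) auto
    show "(\<lambda>t. exp (- t) / s) integrable_on {s..s+1}"
      by (intro integrable_continuous_interval continuous_on_divide continuous_intros) (use assms in auto)
  qed (use assms in \<open>auto simp: divide_simps\<close>)
  also have "\<dots> = (exp (- s) - exp (- (s+1))) / s"
    using integral_unique[OF has_integral_divide[OF int_exp_Icc[of s "s+1"], of s]] by simp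
  finally have a: "integral {s..s+1} ?F \<le> (exp (- s) - exp (- (s+1))) / s" .
  have b: "E1 (s+1) \<le> exp (- (s+1)) / (s+1)" using assms by (intro E1_le) auto
  have "E1 s \<le> (exp (- s) - exp (- (s+1))) / s + exp (- (s+1)) / (s+1)"
    using E1_split[of s "s+1"] a b assms by auto
  then have "s * E1 s \<le> s * ((exp (- s) - exp (- (s+1))) / s + exp (- (s+1)) / (s+1))"
    using assms by (intro mult_left_mono) auto
  also have "\<dots> = (exp (- s) - exp (- (s+1))) + s * exp (- (s+1)) / (s+1)"
    using assms by (simp add: distrib_left)
  also have "\<dots> < exp (- s)"
  proof -
    have "s * exp (- (s+1)) / (s+1) < exp (- (s+1))"
      using assms by (auto simp: field_simps)
    then show ?thesis by linarith
  qed
  finally show ?thesis .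
qed

definition G :: "real \<Rightarrow> real" where "G s = s * E1 s - exp (- s)"

lemma G_deriv: "s > 0 \<Longrightarrow> (G has_real_derivative E1 s) (at s)"
  unfolding G_def
  by (rule derivative_eq_intros E1_deriv refl | simp)+

lemma G_neg: "s > 0 \<Longrightarrow> G s < 0"
  using E1_strict[of s] by (simp add: G_def)

lemma G_ge: "s \<ge> 0 \<Longrightarrow> G s \<ge> - exp (- s)"
  using E1_nonneg0[of s] by (simp add: G_def)

lemma G_0: "G 0 = -1" by (simp add: G_def)

lemma G_right0: "(G \<longlongrightarrow> -1) (at_right 0)"
proof -
  have lim: "((\<lambda>s. s * (E1 1 - ln s)) \<longlongrightarrow> 0) (at_right 0)" by real_asymp
  have "((\<lambda>s. s * E1 s) \<longlongrightarrow> 0) (at_right 0)"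
  proof (rule tendsto_sandwich[OF _ _ tendsto_const lim])
    show "\<forall>\<^sub>F s in at_right 0. 0 \<le> s * E1 s"
      by (intro eventually_mono[OF eventually_at_right_less]) (auto intro!: mult_nonneg_nonneg E1_nonneg0)
    have "\<forall>\<^sub>F s in at_right (0::real). s < 1"
      unfolding eventually_at_right_field by (intro exI[of _ 1]) auto
    then show "\<forall>\<^sub>F s in at_right 0. s * E1 s \<le> s * (E1 1 - ln s)"
      by (auto elim!: eventually_elim2[OF eventually_at_right_less] intro!: mult_left_mono E1_log)
  qed
  then have "((\<lambda>s. s * E1 s - exp (- s)) \<longlongrightarrow> 0 - exp (- 0)) (at_right 0)"
    by (intro tendsto_intros)
  then show ?thesis by (simp add: G_def[abs_def])
qed

lemma G_cont: assumes "b > 0" shows "continuous_on {0..b} G"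
proof -
  have "continuous (at x within {0..b}) G" if "x \<in> {0..b}" for x
  proof (cases "x = 0")
    case True
    then show ?thesis
      using G_right0 assms by (simp add: continuous_within at_within_Icc_at_right G_0)
  next
    case False
    then have "x > 0" using that by auto
    show ?thesis
      using DERIV_isCont[OF G_deriv[OF \<open>x > 0\<close>]] by (rule continuous_at_imp_continuous_at_within)
  qed
  then show ?thesis by (simp add: continuous_on_eq_continuous_within)
qed

lemma G_top: "(G \<longlongrightarrow> 0) at_top"
proof (rule tendsto_sandwich[of "\<lambda>s. - exp (- s)" _ _ "\<lambda>_. 0"])
  show "\<forall>\<^sub>F n in at_top. - exp (- n) \<le> G n"
    by (intro eventually_mono[OF eventually_ge_at_top[of 0]] G_ge)
  show "\<forall>\<^sub>F n in at_top. G n \<le> 0"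
    by (intro eventually_mono[OF eventually_gt_at_top[of 0]]) (simp add: G_neg less_imp_le)
qed (real_asymp, simp)


lemma P1: assumes "y > 0"
  shows "((\<lambda>\<eta>. E (y - \<eta>)) has_integral (G y + 1) / 2) {0..y}"
proof -
  have "((\<lambda>\<eta>. E (y - \<eta>)) has_integral ((\<lambda>\<eta>. - G (y - \<eta>) / 2) y - (\<lambda>\<eta>. - G (y - \<eta>) / 2) 0)) {0..y}"
  proof (rule fundamental_theorem_of_calculus_interior)
    show "0 \<le> y" using assms by simp
    have "continuous_on {0..y} (\<lambda>\<eta>. G (y - \<eta>))"
      by (rule continuous_on_compose2[OF G_cont[OF assms]]) (auto intro!: continuous_intros)
    then show "continuous_on {0..y} (\<lambda>\<eta>. - G (y - \<eta>) / 2)"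
      by (intro continuous_intros) auto
    fix x assume x: "x \<in> {0<..<y}"
    have "((\<lambda>\<eta>. y - \<eta>) has_real_derivative (0 - 1)) (at x)"
      by (intro derivative_eq_intros) auto
    then have "((\<lambda>\<eta>. G (y - \<eta>)) has_real_derivative E1 (y - x) * (0 - 1)) (at x)"
      using x by (intro DERIV_chain2[OF G_deriv]) auto
    then have "((\<lambda>\<eta>. - G (y - \<eta>) / 2) has_real_derivative (- (E1 (y - x) * (0 - 1)) / 2)) (at x)"
      by (intro DERIV_cdivide DERIV_minus)
    moreover have "- (E1 (y - x) * (0 - 1)) / 2 = E (y - x)"
      using x by (simp add: E_E1)
    ultimately show "((\<lambda>\<eta>. - G (y - \<eta>) / 2) has_vector_derivative E (y - x)) (at x)"
      by (simp add: has_real_derivative_iff_has_vector_derivative)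
  qed
  moreover have "(\<lambda>\<eta>. - G (y - \<eta>) / 2) y - (\<lambda>\<eta>. - G (y - \<eta>) / 2) 0 = (G y + 1) / 2"
    by (simp add: G_0)
  ultimately show ?thesis by metis
qed

lemma P2a: assumes "y \<le> b"
  shows "((\<lambda>\<eta>. E (y - \<eta>)) has_integral (G (b - y) + 1) / 2) {y..b}"
proof (cases "y = b")
  case True
  then show ?thesis by (simp add: G_0 has_integral_refl(2))
next
  case False
  then have yb: "y < b" using assms by simp
  have "((\<lambda>\<eta>. E (y - \<eta>)) has_integral ((\<lambda>\<eta>. G (\<eta> - y) / 2) b - (\<lambda>\<eta>. G (\<eta> - y) / 2) y)) {y..b}"
  proof (rule fundamental_theorem_of_calculus_interior)
    show "y \<le> b" using assms by simp
    have "continuous_on {y..b} (\<lambda>\<eta>. G (\<eta> - y))"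
      by (rule continuous_on_compose2[OF G_cont[of "b - y"]]) (use yb in \<open>auto intro!: continuous_intros\<close>)
    then show "continuous_on {y..b} (\<lambda>\<eta>. G (\<eta> - y) / 2)"
      by (intro continuous_intros) auto
    fix x assume x: "x \<in> {y<..<b}"
    have "((\<lambda>\<eta>. \<eta> - y) has_real_derivative (1 - 0)) (at x)"
      by (intro derivative_eq_intros) auto
    then have "((\<lambda>\<eta>. G (\<eta> - y)) has_real_derivative E1 (x - y) * (1 - 0)) (at x)"
      using x by (intro DERIV_chain2[OF G_deriv]) auto
    then have "((\<lambda>\<eta>. G (\<eta> - y) / 2) has_real_derivative (E1 (x - y) * (1 - 0)) / 2) (at x)"
      by (intro DERIV_cdivide)
    moreover have "(E1 (x - y) * (1 - 0)) / 2 = E (y - x)"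
      using x by (simp add: E_E1)
    ultimately show "((\<lambda>\<eta>. G (\<eta> - y) / 2) has_vector_derivative E (y - x)) (at x)"
      by (simp add: has_real_derivative_iff_has_vector_derivative)
  qed
  moreover have "(\<lambda>\<eta>. G (\<eta> - y) / 2) b - (\<lambda>\<eta>. G (\<eta> - y) / 2) y = (G (b - y) + 1) / 2"
    by (simp add: G_0)
  ultimately show ?thesis by metis
qed

lemma P2: "((\<lambda>\<eta>. E (y - \<eta>)) has_integral 1 / 2) {y..}"
proof (rule has_integral_to_inf)
  show "(\<lambda>\<eta>. E (y - \<eta>)) integrable_on {y..b}" for b
    by (cases "y \<le> b") (use P2a in auto)
  show "0 \<le> E (y - \<eta>)" for \<eta> by (rule E_nonneg)
  have "((\<lambda>b. (G (b - y) + 1) / 2) \<longlongrightarrow> (0 + 1) / 2) at_top"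
  proof -
    have "filterlim (\<lambda>b. b - y) at_top at_top" by real_asymp
    then show ?thesis by (intro tendsto_intros filterlim_compose[OF G_top]) auto
  qed
  moreover have "\<forall>\<^sub>F b in at_top. (G (b - y) + 1) / 2 = integral {y..b} (\<lambda>\<eta>. E (y - \<eta>))"
    by (intro eventually_mono[OF eventually_ge_at_top[of y]]) (use P2a integral_unique in metis)
  ultimately show "((\<lambda>b. integral {y..b} (\<lambda>\<eta>. E (y - \<eta>))) \<longlongrightarrow> 1 / 2) at_top"
    using tendsto_cong by fastforce
qed

lemma Ptot: assumes "y > 0"
  shows "((\<lambda>\<eta>. E (y - \<eta>)) has_integral (1 + G y / 2)) {0..}"
proof -
  have "((\<lambda>\<eta>. E (y - \<eta>)) has_integral ((G y + 1) / 2 + 1 / 2)) ({0..y} \<union> {y..})"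
    by (rule has_integral_Un[OF P1[OF assms] P2]) (auto intro: negligible_subset[of "{y}"])
  moreover have "{0..y} \<union> {y..} = {0::real..}" using assms by auto
  ultimately show ?thesis by (simp add: field_simps)
qed

lemma bound: assumes "y > 0" "\<And>\<eta>. \<eta> \<ge> 0 \<Longrightarrow> 0 \<le> f \<eta> \<and> f \<eta> \<le> T"
  shows "integral {0..} (\<lambda>\<eta>. E (y - \<eta>) * f \<eta> ^ 4) \<le> T ^ 4 * (1 + G y / 2)"
proof (cases "(\<lambda>\<eta>. E (y - \<eta>) * f \<eta> ^ 4) integrable_on {0..}")
  case True
  have "integral {0..} (\<lambda>\<eta>. E (y - \<eta>) * f \<eta> ^ 4) \<le> integral {0..} (\<lambda>\<eta>. T ^ 4 * E (y - \<eta>))"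
  proof (rule integral_le[OF True])
    show "(\<lambda>\<eta>. T ^ 4 * E (y - \<eta>)) integrable_on {0..}"
      using has_integral_mult_right[OF Ptot[OF assms(1)], of "T^4"] by blast
    fix x :: real assume "x \<in> {0..}"
    then have "0 \<le> f x" "f x \<le> T" using assms(2) by auto
    then have "f x ^ 4 \<le> T ^ 4" by (intro power_mono)
    then show "E (y - x) * f x ^ 4 \<le> T ^ 4 * E (y - x)"
      using E_nonneg[of "y - x"] by (simp add: mult.commute mult_left_mono)
  qed
  also have "\<dots> = T ^ 4 * (1 + G y / 2)"
    by (rule integral_unique[OF has_integral_mult_right[OF Ptot[OF assms(1)]]])
  finally show ?thesis .
next
  case False
  have "G y \<ge> - 1" using G_ge[of y] assms
    by (smt (verit) exp_ge_zero exp_le_one_iff neg_0_le_iff_le)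
  then have "0 \<le> T ^ 4 * (1 + G y / 2)" by (simp)
  then show ?thesis using False by (simp add: not_integrable_integral)
qed


lemma ascent:
  fixes f f' f'' :: "real \<Rightarrow> real" and c a b :: real
  assumes d1: "\<And>y. y \<ge> 0 \<Longrightarrow> (f has_real_derivative f' y) (at y within {0..})"
    and d2: "\<And>y. y \<ge> 0 \<Longrightarrow> (f' has_real_derivative f'' y) (at y within {0..})"
    and ab: "0 \<le> a" "a < b" and fa: "f' a \<ge> 0"
    and pos: "\<And>y. a < y \<Longrightarrow> y < b \<Longrightarrow> f'' y - c * f' y > 0"
  shows "f b > f a"
proof -
  define h where "h y = exp (- c * y) * f' y" for y
  define h' where "h' y = exp (- c * y) * (f'' y - c * f' y)" for y
  have dh: "(h has_real_derivative h' y) (at y within {0..})" if "y \<ge> 0" for y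
  proof -
    have e: "((\<lambda>y. exp (- c * y)) has_real_derivative exp (- c * y) * (- c)) (at y within {0..})"
      by (auto intro!: derivative_eq_intros)
    have "(h has_real_derivative (exp (- c * y) * (- c)) * f' y + f'' y * exp (- c * y)) (at y within {0..})"
      unfolding h_def by (rule DERIV_mult[OF e d2[OF that]])
    then show ?thesis by (simp add: h'_def algebra_simps)
  qed
  have f'pos: "f' t > 0" if t: "a < t" "t \<le> b" for t
  proof -
    have "\<exists>x\<in>{a<..<t}. h t - h a = (\<lambda>x. (*) (h' x)) x (t - a)"
    proof (rule mvt_simple)
      show "a < t" using t by simp
      fix x assume "a \<le> x" "x \<le> t"
      then have "(h has_real_derivative h' x) (at x within {a..t})"
        using ab by (intro DERIV_subset[OF dh]) auto
      then show "(h has_derivative (*) (h' x)) (at x within {a..t})"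
        by (simp add: has_field_derivative_def)
    qed
    then obtain x where x: "a < x" "x < t" "h t - h a = h' x * (t - a)" by auto
    have "h' x > 0" unfolding h'_def using pos[of x] x t by simp
    then have "h' x * (t - a) > 0" using x by simp
    then have "h t > h a" using x by linarith
    moreover have "h a \<ge> 0" unfolding h_def using fa by simp
    ultimately have "exp (- c * t) * f' t > 0" unfolding h_def by simp
    then show ?thesis by (simp add: zero_less_mult_iff)
  qed
  have "\<exists>x\<in>{a<..<b}. f b - f a = (\<lambda>x. (*) (f' x)) x (b - a)"
  proof (rule mvt_simple)
    show "a < b" using ab by simp
    fix x assume "a \<le> x" "x \<le> b"
    then have "(f has_real_derivative f' x) (at x within {a..b})"
      using ab by (intro DERIV_subset[OF d1]) auto
    then show "(f has_derivative (*) (f' x)) (at x within {a..b})"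
      by (simp add: has_field_derivative_def)
  qed
  then obtain x where x: "a < x" "x < b" "f b - f a = f' x * (b - a)" by auto
  have "f' x > 0" using f'pos[of x] x by simp
  then have "f' x * (b - a) > 0" using x by simp
  then show ?thesis using x by linarith
qed

theorem lemma2p4:
  fixes f f' f'' :: "real \<Rightarrow> real" and T\<^sub>M c :: real
  assumes "T\<^sub>M > 0" and "c > 0"
    and "\<And>y. y \<ge> 0 \<Longrightarrow> (f has_real_derivative f' y) (at y within {0..})"
    and "\<And>y. y \<ge> 0 \<Longrightarrow> (f' has_real_derivative f'' y) (at y within {0..})"
    and "continuous_on {0..} f''"
    and "continuous_on {0..} f" and "bounded (f ` {0..})"
    and "\<And>y. y > 0 \<Longrightarrow>
          f'' y - c * f' y - f y ^ 4 = - integral {0..} (\<lambda>\<eta>. E (y - \<eta>) * f \<eta> ^ 4)"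
    and "f 0 = T\<^sub>M"
    and "\<And>y. y \<ge> 0 \<Longrightarrow> f y \<ge> 0"
    and "\<And>y. y \<ge> 0 \<Longrightarrow> \<bar>f y\<bar> \<le> T\<^sub>M"
  shows "(\<forall>y>0. f y < T\<^sub>M) \<and> f' 0 < 0"
proof -
  note d1 = assms(3) and d2 = assms(4) and eq = assms(8)
  let ?T = "T\<^sub>M"
  have fb: "0 \<le> f \<eta> \<and> f \<eta> \<le> ?T" if "\<eta> \<ge> 0" for \<eta>
    using assms(10,11)[OF that] by auto
  have key: "f'' y - c * f' y \<ge> f y ^ 4 - ?T ^ 4 * (1 + G y / 2)" if "y > 0" for y
    using eq[OF that] bound[where f=f and T="?T", OF that fb] by linarith
  have part1: "f y < ?T" if y: "y > 0" for y
  proof (rule ccontr)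
    assume "\<not> f y < ?T"
    then have fy: "f y = ?T" using fb[of y] y by auto
    have "at y within {0..} = at y"
      using y by (intro at_within_interior) auto
    then have "(f has_real_derivative f' y) (at y)" using d1[of y] y by simp
    then have f'y: "f' y = 0"
    proof (rule DERIV_local_max)
      show "0 < y" by fact
      show "\<forall>z. \<bar>y - z\<bar> < y \<longrightarrow> f z \<le> f y"
        using fb fy by auto
    qed
    have gy: "f'' y - c * f' y > 0"
    proof -
      have "?T ^ 4 * (- G y / 2) > 0"
        using G_neg[OF y] assms(1) by (simp add: mult_pos_neg)
      then show ?thesis using key[OF y] fy by (simp add: algebra_simps)
    qed
    have cf'': "isCont f'' y"
      using y by (intro continuous_on_interior[OF assms(5)]) auto
    have cf': "isCont f' y"
    proof -
      have "(f' has_real_derivative f'' y) (at y)" using d2[of y] y \<open>at y within {0..} = at y\<close> by simp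
      then show ?thesis by (rule DERIV_isCont)
    qed
    have "((\<lambda>z. f'' z - c * f' z) \<longlongrightarrow> f'' y - c * f' y) (at y)"
      using cf'' cf' by (intro tendsto_intros) (auto simp: isCont_def)
    then have "\<forall>\<^sub>F z in at y. f'' z - c * f' z > 0"
      using gy by (rule order_tendstoD)
    then obtain d where d: "d > 0" "\<And>z. z \<noteq> y \<Longrightarrow> dist z y < d \<Longrightarrow> f'' z - c * f' z > 0"
      unfolding eventually_at by blast
    have "f (y + d/2) > f y"
    proof (rule ascent[OF d1 d2])
      show "0 \<le> y" "y < y + d/2" using y d by auto
      show "0 \<le> f' y" using f'y by simp
      fix z assume "y < z" "z < y + d/2"
      then show "f'' z - c * f' z > 0" using d by (auto simp: dist_real_def)
    qed
    moreover have "f (y + d/2) \<le> ?T" using fb[of "y + d/2"] y d by auto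
    ultimately show False using fy by simp
  qed
  have part2: "f' 0 < 0"
  proof (rule ccontr)
    assume "\<not> f' 0 < 0"
    then have f'0: "f' 0 \<ge> 0" by simp
    have "(f \<longlongrightarrow> f 0) (at 0 within {0..})"
      using assms(6) by (simp add: continuous_on_def)
    then have flim: "(f \<longlongrightarrow> ?T) (at_right 0)"
      using assms(9) by (auto intro: tendsto_within_subset)
    have "((\<lambda>y. f y ^ 4 - ?T ^ 4 * (1 + G y / 2)) \<longlongrightarrow> ?T ^ 4 - ?T ^ 4 * (1 + (-1) / 2)) (at_right 0)"
      by (intro tendsto_intros flim G_right0) auto
    moreover have "?T ^ 4 - ?T ^ 4 * (1 + (-1) / 2) > 0" using assms(1) by simp
    ultimately have "\<forall>\<^sub>F y in at_right 0. f y ^ 4 - ?T ^ 4 * (1 + G y / 2) > 0"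
      by (rule order_tendstoD)
    then obtain b where b: "b > 0" "\<And>y. 0 < y \<Longrightarrow> y < b \<Longrightarrow> f y ^ 4 - ?T ^ 4 * (1 + G y / 2) > 0"
      unfolding eventually_at_right_field by auto
    have "f b > f 0"
    proof (rule ascent[OF d1 d2 _ _ f'0])
      show "(0::real) \<le> 0" "0 < b" using b by auto
      fix z assume "0 < z" "z < b"
      then show "f'' z - c * f' z > 0" using b(2)[of z] key[of z] by auto
    qed
    moreover have "f b \<le> ?T" using fb[of b] b by auto
    ultimately show False using assms(9) by simp
  qed
  show ?thesis using part1 part2 by auto
qed

end
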